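(* Let $\ell\ge 0$ be an integer. Each of the following two $2\times(2\ell+3)$ matrices, listed column by column, is a $(2,2\ell+3,1)$-tropical code within maximum delay $\ell$: (1) the columns $(0,\infty),(0,\ell),(0,\ell-1),\dots,(0,1),(0,0),(1,0),(2,0),\dots,(\ell,0),(\infty,0)$; (2) the columns $(0,\infty)$, then $(i,\ell-i)$ for $i=0,\dots,\ell$ interleaved with $(i,\ell-i+1)$ for $i=1,\dots,\ell$ in the order $(0,\ell),(1,\ell),(1,\ell-1),(2,\ell-1),\dots,(\ell-1,1),(\ell,1),(\ell,0)$, and finally $(\infty,0)$. (Each pair $(u,v)$ denotes the column with first entry $u$ and second entry $v$.)
   Context: Tropical arithmetic on $\mathbb{R}\cup\{\infty\}$: $x\oplus y=\min(x,y)$, $x\odot y=x+y$, with $x\oplus\infty=x$ and $x\odot\infty=\infty$. For a matrix $S$ with $T$ rows and $N$ columns and a column vector $\mathbf{x}$ of length $N$, $S\odot\mathbf{x}$ is the vector whose $t$-th entry is $\min_{j}(S_{tj}+x_j)$. A $(T,N,D)$-tropical code is a matrix $S\in(\{0\}\cup\mathbb{N}\cup\{\infty\})^{T\times N}$ such that for any two distinct vectors $\mathbf{x},\mathbf{y}\in(\{0\}\cup\mathbb{N}\cup\{\infty\})^{N}$, each having at most $D$ finite entries, $S\odot\mathbf{x}\ne S\odot\mathbf{y}$. It is within maximum delay $\ell$ if $S\in\{0,1,\dots,\ell,\infty\}^{T\times N}$. *)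

theory Defs
  imports Main "HOL-Library.Extended_Nat"
begin

text \<open>Values in {0} \<union> \<nat> \<union> {\<infinity>} are modelled by enat; tropical addition is min,
  tropical multiplication is +.\<close>

definition trop_mult :: "nat \<Rightarrow> nat \<Rightarrow> (nat \<Rightarrow> nat \<Rightarrow> enat) \<Rightarrow> enat list \<Rightarrow> enat list" where
  "trop_mult T N S x = map (\<lambda>t. INF j\<in>{..<N}. S t j + x ! j) [0..<T]"

definition num_finite :: "enat list \<Rightarrow> nat" where
  "num_finite x = card {j. j < length x \<and> x ! j \<noteq> \<infinity>}"

definition tropical_code :: "nat \<Rightarrow> nat \<Rightarrow> nat \<Rightarrow> (nat \<Rightarrow> nat \<Rightarrow> enat) \<Rightarrow> bool" where
  "tropical_code T N D S \<longleftrightarrow>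
     (\<forall>x y. length x = N \<longrightarrow> length y = N \<longrightarrow> num_finite x \<le> D \<longrightarrow> num_finite y \<le> D
        \<longrightarrow> x \<noteq> y \<longrightarrow> trop_mult T N S x \<noteq> trop_mult T N S y)"

definition within_delay :: "nat \<Rightarrow> nat \<Rightarrow> nat \<Rightarrow> (nat \<Rightarrow> nat \<Rightarrow> enat) \<Rightarrow> bool" where
  "within_delay T N l S \<longleftrightarrow> (\<forall>t<T. \<forall>j<N. S t j = \<infinity> \<or> S t j \<le> enat l)"

definition cols_matrix :: "(enat \<times> enat) list \<Rightarrow> nat \<Rightarrow> nat \<Rightarrow> enat" where
  "cols_matrix cs t j = (if t = 0 then fst (cs ! j) else snd (cs ! j))"

definition code1_cols :: "nat \<Rightarrow> (enat \<times> enat) list" where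
  "code1_cols l = [(0, \<infinity>)] @ map (\<lambda>k. (0, enat (l - k))) [0..<l+1]
                 @ map (\<lambda>i. (enat i, 0)) [1..<l+1] @ [(\<infinity>, 0)]"

definition code2_cols :: "nat \<Rightarrow> (enat \<times> enat) list" where
  "code2_cols l = [(0, \<infinity>), (0, enat l)]
     @ concat (map (\<lambda>i. [(enat i, enat (l - i + 1)), (enat i, enat (l - i))]) [1..<l+1])
     @ [(\<infinity>, 0)]"

end

theory Submission
  imports Defs
begin

lemma concat_pairs:
  "concat (map (\<lambda>i. [A i, B i]) [1..<n+1]) =
   map (\<lambda>k. if even k then A (k div 2 + 1) else B (k div 2 + 1)) [0..<2*n]"
proof (induction n)
  case 0 then show ?case by simp
next
  case (Suc n)
  have "[0..<2*Suc n] = [0..<2*n] @ [2*n, 2*n+1]" by simp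
  then show ?case using Suc by simp
qed

lemma code1_len: "length (code1_cols l) = 2*l+3"
  by (simp add: code1_cols_def)

lemma code2_len: "length (code2_cols l) = 2*l+3"
  unfolding code2_cols_def concat_pairs by simp

lemma code1_nth:
  assumes "j < 2*l+3"
  shows "code1_cols l ! j = (if j = 0 then (0,\<infinity>) else if j = 2*l+2 then (\<infinity>,0)
           else (enat (j-(l+1)), enat (l+1-j)))"
  using assms by (auto simp del: upt_Suc simp: code1_cols_def nth_append zero_enat_def)

lemma code2_nth:
  assumes "j < 2*l+3"
  shows "code2_cols l ! j = (if j = 0 then (0,\<infinity>) else if j = 2*l+2 then (\<infinity>,0)
           else (enat (j div 2), enat (l - (j-1) div 2)))"
proof -
  have e: "code2_cols l = [(0, \<infinity>), (0, enat l)]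
     @ map (\<lambda>k. if even k then (enat (k div 2 + 1), enat (l - (k div 2 + 1) + 1))
                 else (enat (k div 2 + 1), enat (l - (k div 2 + 1)))) [0..<2*l] @ [(\<infinity>, 0)]"
    unfolding code2_cols_def concat_pairs by simp
  let ?M = "map (\<lambda>k. if even k then (enat (k div 2 + 1), enat (l - (k div 2 + 1) + 1))
                 else (enat (k div 2 + 1), enat (l - (k div 2 + 1)))) [0..<2*l]"
  have lM: "length ?M = 2*l" by simp
  consider "j = 0" | "j = 1" | "j = 2*l+2" | "2 \<le> j \<and> j \<le> 2*l+1" using assms by linarith
  then show ?thesis
  proof cases
    case 1 then show ?thesis unfolding e by simp
  next
    case 2 then show ?thesis unfolding e by (simp add: zero_enat_def)
  next
    case 3
    have "([(0, \<infinity>), (0, enat l)] @ ?M @ [(\<infinity>, 0)]) ! (2*l+2) = (\<infinity>, 0)"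
      by (simp add: nth_append del: upt_Suc)
    then show ?thesis unfolding e using 3 by simp
  next
    case 4
    define k where "k = j - 2"
    have jk: "j = k + 2" "k < 2*l" using 4 k_def by auto
    have "([(0, \<infinity>), (0, enat l)] @ ?M @ [(\<infinity>, 0)]) ! j = ?M ! k"
      using jk by (simp add: nth_append del: upt_Suc)
    also have "\<dots> = (if even k then (enat (k div 2 + 1), enat (l - (k div 2 + 1) + 1))
                 else (enat (k div 2 + 1), enat (l - (k div 2 + 1))))"
      using jk by (simp del: upt_Suc)
    also have "\<dots> = (enat (j div 2), enat (l - (j-1) div 2))"
    proof (cases "even k")
      case True
      then obtain m where m: "k = 2*m" by (elim evenE)
      have "m < l" using jk m by simp
      moreover have "j div 2 = m + 1" "(j-1) div 2 = m" using jk m by simp_all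
      ultimately show ?thesis using True m by (simp add: Suc_diff_Suc)
    next
      case False
      then obtain m where m: "k = 2*m+1" by (elim oddE)
      have "j div 2 = m + 1" "(j-1) div 2 = m + 1" using jk m by simp_all
      then show ?thesis using False m by simp
    qed
    finally show ?thesis unfolding e using 4 by simp
  qed
qed

lemma vec_form:
  assumes "length x = N" "num_finite x \<le> 1"
  shows "x = replicate N \<infinity> \<or> (\<exists>j<N. \<exists>a. x = (replicate N \<infinity>)[j := enat a])"
proof (cases "\<exists>j<N. x ! j \<noteq> \<infinity>")
  case False
  then have "x = replicate N \<infinity>" using assms(1) by (simp add: list_eq_iff_nth_eq)
  then show ?thesis by simp
next
  case True
  then obtain j where j: "j < N" "x ! j \<noteq> \<infinity>" by blast
  then obtain a where a: "x ! j = enat a" by auto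
  have oth: "x ! k = \<infinity>" if "k < N" "k \<noteq> j" for k
  proof (rule ccontr)
    assume "x ! k \<noteq> \<infinity>"
    then have "{j, k} \<subseteq> {j. j < length x \<and> x ! j \<noteq> \<infinity>}" using j that assms(1) by auto
    then have "card {j, k} \<le> num_finite x" unfolding num_finite_def
      by (intro card_mono) auto
    then show False using that assms(2) by simp
  qed
  have "x = (replicate N \<infinity>)[j := enat a]"
    using assms(1) j a oth by (auto simp: list_eq_iff_nth_eq nth_list_update)
  then show ?thesis using j by blast
qed

lemma upt2: "[0..<2] = [0, 1::nat]" by (simp add: numeral_2_eq_2)

lemma tm_inf: "trop_mult 2 N S (replicate N \<infinity>) = [\<infinity>, \<infinity>]"
proof -
  have "(INF k\<in>{..<N}. S t k + replicate N \<infinity> ! k) = \<infinity>" for t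
    by (rule antisym[OF _ INF_greatest]) auto
  then show ?thesis unfolding trop_mult_def upt2 by simp
qed

lemma tm_one:
  assumes "j < N"
  shows "trop_mult 2 N S ((replicate N \<infinity>)[j := enat a]) = [S 0 j + enat a, S 1 j + enat a]"
proof -
  have "(INF k\<in>{..<N}. S t k + (replicate N \<infinity>)[j := enat a] ! k) = S t j + enat a" for t
  proof (rule antisym)
    show "(INF k\<in>{..<N}. S t k + (replicate N \<infinity>)[j := enat a] ! k) \<le> S t j + enat a"
      using assms by (intro INF_lower2[of j]) auto
    show "S t j + enat a \<le> (INF k\<in>{..<N}. S t k + (replicate N \<infinity>)[j := enat a] ! k)"
      using assms by (intro INF_greatest) (auto simp: nth_list_update)
  qed
  then show ?thesis unfolding trop_mult_def upt2 by simp
qed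

lemma code_general:
  assumes len: "length cs = N" and N2: "N \<ge> 2"
    and c0: "cs ! 0 = (0, \<infinity>)" and cl: "cs ! (N-1) = (\<infinity>, 0)"
    and mid: "\<And>j. 0 < j \<Longrightarrow> j < N - 1 \<Longrightarrow> cs ! j = (enat (f j), enat (g j))"
    and inj: "\<And>j j'. 0 < j \<Longrightarrow> j < N - 1 \<Longrightarrow> 0 < j' \<Longrightarrow> j' < N - 1 \<Longrightarrow>
               int (g j) - int (f j) = int (g j') - int (f j') \<Longrightarrow> j = j'"
  shows "tropical_code 2 N 1 (cols_matrix cs)"
proof -
  let ?S = "cols_matrix cs"
  have N0: "N - 1 \<noteq> 0" using N2 by simp
  have S0: "?S 0 0 = 0" "?S 1 0 = \<infinity>" using c0 by (simp_all add: cols_matrix_def)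
  have Sl: "?S 0 (N-1) = \<infinity>" "?S 1 (N-1) = 0" using cl by (simp_all add: cols_matrix_def)
  have Sm: "?S 0 j = enat (f j)" "?S 1 j = enat (g j)" if "0 < j" "j < N - 1" for j
    using mid[OF that] by (simp_all add: cols_matrix_def)
  have cases3: "j = 0 \<or> j = N - 1 \<or> (0 < j \<and> j < N - 1)" if "j < N" for j using that by arith
  have nz: "[?S 0 j + enat a, ?S 1 j + enat a] \<noteq> [\<infinity>, \<infinity>]" if "j < N" for j a
    using cases3[OF that]
  proof (elim disjE conjE)
    assume "j = 0" then show ?thesis using S0 by (simp add: zero_enat_def)
  next
    assume "j = N - 1" then show ?thesis using Sl by (simp add: zero_enat_def)
  next
    assume "0 < j" "j < N - 1" then show ?thesis using Sm[of j] by simp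
  qed
  have ij: "j = j' \<and> a = a'" if "j < N" "j' < N"
     and eq: "[?S 0 j + enat a, ?S 1 j + enat a] = [?S 0 j' + enat a', ?S 1 j' + enat a']" for j j' a a'
  proof -
    have e0: "?S 0 j + enat a = ?S 0 j' + enat a'" and e1: "?S 1 j + enat a = ?S 1 j' + enat a'"
      using eq by simp_all
    show ?thesis using cases3[OF that(1)] cases3[OF that(2)]
    proof (elim disjE conjE)
      assume "j = 0" "j' = 0" then show ?thesis using e0 S0 by simp
    next
      assume "j = 0" "j' = N - 1" then show ?thesis using e1 S0 Sl by (simp add: zero_enat_def)
    next
      assume "j = 0" "0 < j'" "j' < N - 1" then show ?thesis using e1 S0 Sm[of j'] by simp
    next
      assume "j = N - 1" "j' = 0" then show ?thesis using e1 S0 Sl by (simp add: zero_enat_def)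
    next
      assume "j = N - 1" "j' = N - 1" then show ?thesis using e1 Sl by (simp add: zero_enat_def)
    next
      assume "j = N - 1" "0 < j'" "j' < N - 1" then show ?thesis using e0 Sl Sm[of j'] by simp
    next
      assume "0 < j" "j < N - 1" "j' = 0" then show ?thesis using e1 S0 Sm[of j] by simp
    next
      assume "0 < j" "j < N - 1" "j' = N - 1" then show ?thesis using e0 Sl Sm[of j] by simp
    next
      assume a: "0 < j" "j < N - 1" "0 < j'" "j' < N - 1"
      then have "f j + a = f j' + a'" "g j + a = g j' + a'"
        using e0 e1 Sm[of j] Sm[of j'] by simp_all
      then have "int (g j) - int (f j) = int (g j') - int (f j')" by linarith
      then have "j = j'" using inj a by blast
      then show ?thesis using \<open>f j + a = f j' + a'\<close> by simp
    qed
  qed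
  show ?thesis unfolding tropical_code_def
  proof (intro allI impI)
    fix x y :: "enat list"
    assume h: "length x = N" "length y = N" "num_finite x \<le> 1" "num_finite y \<le> 1" "x \<noteq> y"
    show "trop_mult 2 N ?S x \<noteq> trop_mult 2 N ?S y"
      using vec_form[OF h(1,3)] vec_form[OF h(2,4)]
    proof (elim disjE exE conjE)
      assume "x = replicate N \<infinity>" "y = replicate N \<infinity>"
      then show ?thesis using h(5) by simp
    next
      fix j a assume a: "x = replicate N \<infinity>" "j < N" "y = (replicate N \<infinity>)[j := enat a]"
      have "trop_mult 2 N ?S x = [\<infinity>, \<infinity>]" using a tm_inf by simp
      moreover have "trop_mult 2 N ?S y = [?S 0 j + enat a, ?S 1 j + enat a]" using a tm_one by simp
      ultimately show ?thesis using nz[OF a(2), of a] by metis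
    next
      fix j a assume a: "y = replicate N \<infinity>" "j < N" "x = (replicate N \<infinity>)[j := enat a]"
      have "trop_mult 2 N ?S y = [\<infinity>, \<infinity>]" using a tm_inf by simp
      moreover have "trop_mult 2 N ?S x = [?S 0 j + enat a, ?S 1 j + enat a]" using a tm_one by simp
      ultimately show ?thesis using nz[OF a(2), of a] by metis
    next
      fix j a j' a' assume jj: "j < N" "x = (replicate N \<infinity>)[j := enat a]"
        "j' < N" "y = (replicate N \<infinity>)[j' := enat a']"
      show ?thesis
      proof
        assume "trop_mult 2 N ?S x = trop_mult 2 N ?S y"
        then have "[?S 0 j + enat a, ?S 1 j + enat a] = [?S 0 j' + enat a', ?S 1 j' + enat a']"
          using jj tm_one[of j N ?S a] tm_one[of j' N ?S a'] by simp
        then have "j = j' \<and> a = a'" using ij jj by blast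
        then show False using jj h(5) by simp
      qed
    qed
  qed
qed

lemma div_sum: "0 < (j::nat) \<Longrightarrow> (j-1) div 2 + j div 2 = j - 1"
proof -
  assume "0 < j"
  then obtain i where i: "j = Suc i" by (cases j) auto
  show ?thesis
  proof (cases "even i")
    case True then obtain m where "i = 2*m" by (elim evenE)
    then show ?thesis using i by simp
  next
    case False then obtain m where "i = 2*m+1" by (elim oddE)
    then show ?thesis using i by simp
  qed
qed

lemma c1: "tropical_code 2 (2*l+3) 1 (cols_matrix (code1_cols l))"
proof (rule code_general[where f = "\<lambda>j. j-(l+1)" and g = "\<lambda>j. l+1-j"])
  show "length (code1_cols l) = 2*l+3" by (rule code1_len)
  show "2 \<le> 2*l+3" by simp
  show "code1_cols l ! 0 = (0, \<infinity>)" by (simp add: code1_nth)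
  show "code1_cols l ! (2*l+3-1) = (\<infinity>, 0)" by (simp add: code1_nth)
  fix j assume "0 < j" "j < 2*l+3-1"
  then show "code1_cols l ! j = (enat (j-(l+1)), enat (l+1-j))" by (simp add: code1_nth)
next
  fix j j' :: nat
  assume "0 < j" "j < 2*l+3-1" "0 < j'" "j' < 2*l+3-1"
    "int (l+1-j) - int (j-(l+1)) = int (l+1-j') - int (j'-(l+1))"
  then show "j = j'" by linarith
qed

lemma c2: "tropical_code 2 (2*l+3) 1 (cols_matrix (code2_cols l))"
proof (rule code_general[where f = "\<lambda>j. j div 2" and g = "\<lambda>j. l - (j-1) div 2"])
  show "length (code2_cols l) = 2*l+3" by (rule code2_len)
  show "2 \<le> 2*l+3" by simp
  show "code2_cols l ! 0 = (0, \<infinity>)" using code2_nth[of 0 l] by simp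
  show "code2_cols l ! (2*l+3-1) = (\<infinity>, 0)" using code2_nth[of "2*l+2" l] by simp
  fix j assume "0 < j" "j < 2*l+3-1"
  then show "code2_cols l ! j = (enat (j div 2), enat (l - (j-1) div 2))"
    using code2_nth[of j l] by simp
next
  fix j j' :: nat
  assume a: "0 < j" "j < 2*l+3-1" "0 < j'" "j' < 2*l+3-1"
    "int (l - (j-1) div 2) - int (j div 2) = int (l - (j'-1) div 2) - int (j' div 2)"
  have d: "(2*l+1) div 2 = l" by simp
  have "j - 1 \<le> 2*l+1" "j' - 1 \<le> 2*l+1" using a(2,4) by simp_all
  then have "(j-1) div 2 \<le> (2*l+1) div 2" "(j'-1) div 2 \<le> (2*l+1) div 2"
    by (simp_all only: div_le_mono)
  then have p: "(j-1) div 2 \<le> l" "(j'-1) div 2 \<le> l" unfolding d .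
  have q: "int (l - (j-1) div 2) = int l - int ((j-1) div 2)"
          "int (l - (j'-1) div 2) = int l - int ((j'-1) div 2)" using p by (simp_all add: of_nat_diff)
  have r: "int ((j-1) div 2) + int (j div 2) = int (j - 1)"
          "int ((j'-1) div 2) + int (j' div 2) = int (j' - 1)"
    using div_sum[OF a(1)] div_sum[OF a(3)] by (metis of_nat_add)+
  have "int (j - 1) = int (j' - 1)" using a(5) q r by linarith
  then show "j = j'" using a(1,3) by simp
qed

lemma wd_general:
  assumes "\<And>j. j < N \<Longrightarrow> (\<exists>a b. cs ! j = (a, b) \<and> (a = \<infinity> \<or> a \<le> enat l) \<and> (b = \<infinity> \<or> b \<le> enat l))"
  shows "within_delay 2 N l (cols_matrix cs)"
  unfolding within_delay_def cols_matrix_def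
proof (intro allI impI)
  fix t j :: nat assume "t < 2" "j < N"
  then obtain a b where "cs ! j = (a, b)" "a = \<infinity> \<or> a \<le> enat l" "b = \<infinity> \<or> b \<le> enat l"
    using assms by blast
  then show "(if t = 0 then fst (cs ! j) else snd (cs ! j)) = \<infinity> \<or>
    (if t = 0 then fst (cs ! j) else snd (cs ! j)) \<le> enat l" by simp
qed

lemma w1: "within_delay 2 (2*l+3) l (cols_matrix (code1_cols l))"
proof (rule wd_general)
  fix j assume j: "j < 2*l+3"
  show "\<exists>a b. code1_cols l ! j = (a, b) \<and> (a = \<infinity> \<or> a \<le> enat l) \<and> (b = \<infinity> \<or> b \<le> enat l)"
  proof (cases "j = 0 \<or> j = 2*l+2")
    case True
    then have "code1_cols l ! j = (0, \<infinity>) \<or> code1_cols l ! j = (\<infinity>, 0)"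
      using j code1_nth[of j l] by auto
    then show ?thesis by (elim disjE) simp_all
  next
    case False
    then have e: "code1_cols l ! j = (enat (j-(l+1)), enat (l+1-j))" using j by (simp add: code1_nth)
    have "j-(l+1) \<le> l" "l+1-j \<le> l" using j False by linarith+
    then show ?thesis unfolding e by (intro exI[of _ "enat (j-(l+1))"] exI[of _ "enat (l+1-j)"]) simp
  qed
qed

lemma w2: "within_delay 2 (2*l+3) l (cols_matrix (code2_cols l))"
proof (rule wd_general)
  fix j assume j: "j < 2*l+3"
  show "\<exists>a b. code2_cols l ! j = (a, b) \<and> (a = \<infinity> \<or> a \<le> enat l) \<and> (b = \<infinity> \<or> b \<le> enat l)"
  proof (cases "j = 0 \<or> j = 2*l+2")
    case True
    then have "code2_cols l ! j = (0, \<infinity>) \<or> code2_cols l ! j = (\<infinity>, 0)"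
      using j code2_nth[of j l] by auto
    then show ?thesis by (elim disjE) simp_all
  next
    case False
    then have e: "code2_cols l ! j = (enat (j div 2), enat (l - (j-1) div 2))" using j by (simp add: code2_nth)
    have "j div 2 \<le> l" using j False by linarith
    moreover have "l - (j-1) div 2 \<le> l" by simp
    ultimately show ?thesis unfolding e by (intro exI[of _ "enat (j div 2)"] exI[of _ "enat (l - (j-1) div 2)"]) simp
  qed
qed

theorem mainTheorem2:
  fixes l :: nat
  shows "length (code1_cols l) = 2*l+3 \<and> tropical_code 2 (2*l+3) 1 (cols_matrix (code1_cols l))
           \<and> within_delay 2 (2*l+3) l (cols_matrix (code1_cols l))
         \<and> length (code2_cols l) = 2*l+3 \<and> tropical_code 2 (2*l+3) 1 (cols_matrix (code2_cols l))
           \<and> within_delay 2 (2*l+3) l (cols_matrix (code2_cols l))"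
  using code1_len code2_len c1 c2 w1 w2 by (intro conjI)

end
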